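(* Let $N\ge 1$ senders each receive an equiprobable binary input $x_i\in\{0,1\}$, and let $\theta$ satisfy $2\tan^{-1}(2^{1/N}-1)\le\theta<\pi/2$. If each sender $S_i$ sends the qubit state $|\psi_{x_i}\rangle=\cos(\theta/2)|0\rangle+(-1)^{x_i}\sin(\theta/2)|1\rangle$, then there is a $2^N$-outcome measurement $\{M_{\vec z}\}$ on the receiver's $N$ qubits with $\langle\psi_{\vec x}|M_{\vec x}|\psi_{\vec x}\rangle=0$ for all $\vec x\in\{0,1\}^N$ (where $|\psi_{\vec x}\rangle=|\psi_{x_1}\rangle\otimes\cdots\otimes|\psi_{x_N}\rangle$), so that the quantum success metric is $\widetilde{\mathcal S}_Q=1$; each sender's pair of states has anti-distinguishability $A^Q=\tfrac12(1+\sin\theta)$; while any classical strategy achieving $\widetilde{\mathcal S}_C=1$ with a common anti-distinguishability bound $A$ for all senders requires $A^C=1$. Consequently $$\left(\frac{A^C}{A^Q}\right)^N=\left(\frac{2}{1+\sin\theta}\right)^N>1.$$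
   Context: Setting: $N$ independent senders, one receiver with no input. For quantum communication, sender $S_i$ sends a state $\rho_{x_i}$ and the receiver measures a POVM $\{M_{z}\}$ on $\bigotimes_i\rho_{x_i}$, with $z$ ranging over input tuples $\vec x$. The success metric for anti-distinguishing distributed inputs is $\widetilde{\mathcal S}=1-\sum_{\vec x}q_{\vec x}\,p(z=\vec x|\vec x)$ with $q_{\vec x}=\prod_i q_{x_i}$ (here $q_{x_i}=1/2$). The anti-distinguishability of a set of states $\{\rho_{x}\}$ with prior $\{q_x\}$ is $1-\min_{\{M_z\}}\sum_z\min_x q_x\operatorname{Tr}(\rho_xM_z)$, the minimum over POVMs with as many outcomes as inputs. Classically, sender $S_i$ encodes $x_i$ into a message $m_i$ via $p_e(m_i|x_i)$ with anti-distinguishability $1-\sum_{m_i}\min_{x_i}q_{x_i}p_e(m_i|x_i)$, and the receiver decodes with $p_d(z|\vec m)$. $A^C$ is the minimal common value $A$ of the senders' anti-distinguishabilities for which a classical strategy achieves the target value of $\widetilde{\mathcal S}$ (here $1$); $A^Q$ is the common anti-distinguishability of each sender's quantum states in the quantum protocol achieving the same value. *)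

theory Defs
  imports Complex_Main "Jordan_Normal_Form.Matrix"
begin

definition mtrace :: "complex mat \<Rightarrow> complex" where
  "mtrace M = (\<Sum>i<dim_row M. M $$ (i, i))"

definition psd :: "nat \<Rightarrow> complex mat \<Rightarrow> bool" where
  "psd d M \<longleftrightarrow> M \<in> carrier_mat d d
     \<and> (\<forall>i<d. \<forall>j<d. M $$ (i, j) = cnj (M $$ (j, i)))
     \<and> (\<forall>v \<in> carrier_vec d. Im (scalar_prod (M *\<^sub>v v) (conjugate v)) = 0 \<and> 0 \<le> Re (scalar_prod (M *\<^sub>v v) (conjugate v)))"

definition povm :: "nat \<Rightarrow> 'z set \<Rightarrow> ('z \<Rightarrow> complex mat) \<Rightarrow> bool" where
  "povm d Z M \<longleftrightarrow> finite Z \<and> (\<forall>z\<in>Z. psd d (M z))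
     \<and> (\<forall>i<d. \<forall>j<d. (\<Sum>z\<in>Z. M z $$ (i, j)) = (1\<^sub>m d) $$ (i, j))"

definition braket :: "complex vec \<Rightarrow> complex mat \<Rightarrow> complex" where
  "braket \<psi> M = scalar_prod (M *\<^sub>v \<psi>) (conjugate \<psi>)"

definition dens :: "complex vec \<Rightarrow> complex mat" where
  "dens \<psi> = mat (dim_vec \<psi>) (dim_vec \<psi>) (\<lambda>(i, j). \<psi> $ i * cnj (\<psi> $ j))"

definition antidist :: "nat \<Rightarrow> 'x set \<Rightarrow> ('x \<Rightarrow> real) \<Rightarrow> ('x \<Rightarrow> complex mat) \<Rightarrow> real" where
  "antidist d X q \<rho> = 1 - (INF M \<in> {M. povm d X M}.
      (\<Sum>z\<in>X. Min ((\<lambda>x. q x * Re (mtrace (\<rho> x * M z))) ` X)))"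

definition qstate :: "real \<Rightarrow> bool \<Rightarrow> complex vec" where
  "qstate \<theta> x = vec_of_list [complex_of_real (cos (\<theta> / 2)),
                              complex_of_real ((if x then -1 else 1) * sin (\<theta> / 2))]"

text \<open>N-qubit product state |psi_x1> (x) ... (x) |psi_xN>, where the input tuple is encoded
  by k < 2^N with x_(j+1) = bit k j, and the computational basis vector with index b < 2^N
  has qubit j+1 in state |bit b j>.\<close>
definition qstateN :: "nat \<Rightarrow> real \<Rightarrow> nat \<Rightarrow> complex vec" where
  "qstateN N \<theta> k = vec (2 ^ N) (\<lambda>b. \<Prod>j<N. qstate \<theta> (bit k j) $ (if bit b j then 1 else 0))"

definition succ_Q :: "nat \<Rightarrow> real \<Rightarrow> (nat \<Rightarrow> complex mat) \<Rightarrow> real" where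
  "succ_Q N \<theta> M = 1 - (\<Sum>k<2 ^ N. (1 / 2) ^ N * Re (braket (qstateN N \<theta> k) (M k)))"

definition AQ :: "real \<Rightarrow> real" where
  "AQ \<theta> = antidist 2 (UNIV :: bool set) (\<lambda>_. 1 / 2) (\<lambda>x. dens (qstate \<theta> x))"

text \<open>Sender i (i < N) has a finite message set Ms i and encoding pe i x m = p_e(m|x);
  the receiver decodes a message tuple m (function on {..<N}) into z < 2^N with pd m z.\<close>
definition classical_strategy ::
  "nat \<Rightarrow> (nat \<Rightarrow> nat set) \<Rightarrow> (nat \<Rightarrow> bool \<Rightarrow> nat \<Rightarrow> real) \<Rightarrow> ((nat \<Rightarrow> nat) \<Rightarrow> nat \<Rightarrow> real) \<Rightarrow> bool" where
  "classical_strategy N Ms pe pd \<longleftrightarrow>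
     (\<forall>i<N. finite (Ms i) \<and> (\<forall>x. (\<forall>m\<in>Ms i. 0 \<le> pe i x m) \<and> (\<Sum>m\<in>Ms i. pe i x m) = 1))
     \<and> (\<forall>m \<in> PiE {..<N} Ms. (\<forall>z<2 ^ N. 0 \<le> pd m z) \<and> (\<Sum>z<2 ^ N. pd m z) = 1)"

text \<open>p(z | x) for the input tuple encoded by k.\<close>
definition cprob :: "nat \<Rightarrow> (nat \<Rightarrow> nat set) \<Rightarrow> (nat \<Rightarrow> bool \<Rightarrow> nat \<Rightarrow> real) \<Rightarrow> ((nat \<Rightarrow> nat) \<Rightarrow> nat \<Rightarrow> real) \<Rightarrow> nat \<Rightarrow> nat \<Rightarrow> real" where
  "cprob N Ms pe pd z k = (\<Sum>m \<in> PiE {..<N} Ms. (\<Prod>i<N. pe i (bit k i) (m i)) * pd m z)"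

definition succ_C :: "nat \<Rightarrow> (nat \<Rightarrow> nat set) \<Rightarrow> (nat \<Rightarrow> bool \<Rightarrow> nat \<Rightarrow> real) \<Rightarrow> ((nat \<Rightarrow> nat) \<Rightarrow> nat \<Rightarrow> real) \<Rightarrow> real" where
  "succ_C N Ms pe pd = 1 - (\<Sum>k<2 ^ N. (1 / 2) ^ N * cprob N Ms pe pd k k)"

definition antidist_C :: "nat set \<Rightarrow> (bool \<Rightarrow> nat \<Rightarrow> real) \<Rightarrow> real" where
  "antidist_C Ms e = 1 - (\<Sum>m\<in>Ms. Min ((\<lambda>x. (1 / 2) * e x m) ` UNIV))"

definition AC :: "nat \<Rightarrow> real" where
  "AC N = Inf {A. \<exists>Ms pe pd. classical_strategy N Ms pe pd \<and> succ_C N Ms pe pd = 1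
                     \<and> (\<forall>i<N. antidist_C (Ms i) (pe i) = A)}"

end

theory Submission
  imports Defs
begin


lemma dens_mult_vec:
  assumes "dim_vec v = dim_vec \<psi>" "i < dim_vec \<psi>"
  shows "(dens \<psi> *\<^sub>v v) $ i = \<psi> $ i * cnj (\<Sum>j<dim_vec \<psi>. \<psi> $ j * cnj (v $ j))"
  using assms
  by (simp add: dens_def scalar_prod_def row_def sum_distrib_left atLeast0LessThan mult.assoc)

lemma dens_quad:
  assumes "dim_vec v = dim_vec \<psi>"
  shows "(dens \<psi> *\<^sub>v v) \<bullet>c v = (\<Sum>i<dim_vec \<psi>. \<psi> $ i * cnj (v $ i)) * cnj (\<Sum>i<dim_vec \<psi>. \<psi> $ i * cnj (v $ i))"
proof -
  have "(dens \<psi> *\<^sub>v v) \<bullet>c v = (\<Sum>i<dim_vec \<psi>. (\<psi> $ i * cnj (\<Sum>j<dim_vec \<psi>. \<psi> $ j * cnj (v $ j))) * cnj (v $ i))"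
    using assms by (simp add: scalar_prod_def dens_mult_vec atLeast0LessThan)
  also have "\<dots> = (\<Sum>i<dim_vec \<psi>. \<psi> $ i * cnj (v $ i)) * cnj (\<Sum>i<dim_vec \<psi>. \<psi> $ i * cnj (v $ i))"
    by (simp add: sum_distrib_right mult_ac)
  finally show ?thesis .
qed

lemma zcnj: fixes z :: complex shows "Im (z * cnj z) = 0" "0 \<le> Re (z * cnj z)"
  by (simp_all add: complex_mult_cnj)

lemma psd_dens:
  assumes "\<psi> \<in> carrier_vec d"
  shows "psd d (dens \<psi>)"
proof -
  have d: "dim_vec \<psi> = d" using assms by simp
  show ?thesis
    unfolding psd_def
  proof (intro conjI allI impI ballI)
    show "dens \<psi> \<in> carrier_mat d d" using d by (simp add: dens_def)
  next
    fix i j assume "i < d" "j < d"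
    then show "dens \<psi> $$ (i, j) = cnj (dens \<psi> $$ (j, i))" using d by (simp add: dens_def)
  next
    fix v :: "complex vec" assume "v \<in> carrier_vec d"
    then have "dim_vec v = dim_vec \<psi>" using d by simp
    then have q: "(dens \<psi> *\<^sub>v v) \<bullet>c v = (\<Sum>i<dim_vec \<psi>. \<psi> $ i * cnj (v $ i)) * cnj (\<Sum>i<dim_vec \<psi>. \<psi> $ i * cnj (v $ i))"
      by (rule dens_quad)
    show "Im ((dens \<psi> *\<^sub>v v) \<bullet>c v) = 0" unfolding q by (rule zcnj)
    show "0 \<le> Re ((dens \<psi> *\<^sub>v v) \<bullet>c v)" unfolding q by (rule zcnj)
  qed
qed



lemma sum_even_odd: "(\<Sum>k<2*M. g k) = (\<Sum>k<M. g (2*k) + g (2*k+1))" for g :: "nat \<Rightarrow> 'a::comm_monoid_add"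
  by (induction M) (simp_all add: add.assoc)

lemma sum_bits_prod:
  fixes f :: "nat \<Rightarrow> bool \<Rightarrow> 'a::comm_semiring_1"
  shows "(\<Sum>k<(2::nat)^N. \<Prod>j<N. f j (bit k j)) = (\<Prod>j<N. f j False + f j True)"
proof (induction N arbitrary: f)
  case 0
  show ?case by simp
next
  case (Suc N)
  have e: "bit (2*k) (Suc j) = bit k j" "bit (2*k+1) (Suc j) = bit k j" for k j :: nat
    by (simp_all add: bit_Suc)
  have e0: "bit (2*k) 0 = False" "bit (2*k+1) 0 = True" for k :: nat
    by (simp_all add: bit_0)
  have "(\<Sum>k<(2::nat)^Suc N. \<Prod>j<Suc N. f j (bit k j))
      = (\<Sum>k<(2::nat)^N. (\<Prod>j<Suc N. f j (bit (2*k) j)) + (\<Prod>j<Suc N. f j (bit (2*k+1) j)))"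
    by (simp only: power_Suc sum_even_odd)
  also have "\<dots> = (\<Sum>k<(2::nat)^N. f 0 False * (\<Prod>j<N. f (Suc j) (bit k j)) + f 0 True * (\<Prod>j<N. f (Suc j) (bit k j)))"
    by (simp only: prod.lessThan_Suc_shift e e0)
  also have "\<dots> = (f 0 False + f 0 True) * (\<Sum>k<(2::nat)^N. \<Prod>j<N. f (Suc j) (bit k j))"
    by (simp add: sum.distrib sum_distrib_left distrib_right)
  also have "\<dots> = (f 0 False + f 0 True) * (\<Prod>j<N. f (Suc j) False + f (Suc j) True)"
    using Suc.IH[of "\<lambda>j. f (Suc j)"] by simp
  also have "\<dots> = (\<Prod>j<Suc N. f j False + f j True)"
    by (simp only: prod.lessThan_Suc_shift)
  finally show ?case by simp
qed

lemma bits_eq_imp_eq: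
  fixes i j :: nat
  assumes "i < 2^N" "j < 2^N" "\<forall>l<N. bit i l = bit j l"
  shows "i = j"
proof -
  have "bit i n = bit j n" for n
  proof (cases "n < N")
    case True then show ?thesis using assms by simp
  next
    case False
    then have "bit i n = False" "bit j n = False" using assms(1,2)
      by (metis bit_take_bit_iff take_bit_nat_eq_self_iff)+
    then show ?thesis by simp
  qed
  then show ?thesis by (simp add: bit_eq_iff)
qed



lemma exists_vw:
  fixes c s :: real
  assumes c: "c > 0" and s: "0 \<le> s" "s \<le> c" and th: "(c + s)^N \<ge> 2 * c^N"
  shows "\<exists>v w::complex. cmod v = 1 \<and> cmod w = 1 \<and> (of_real c + of_real s * v)^N + (w - 1) * of_real c ^ N = 0"
proof -
  define f where "f \<alpha> = cmod ((of_real c + of_real s * cis \<alpha>)^N - of_real c ^ N)" for \<alpha>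
  have f0: "f 0 = (c + s)^N - c^N"
  proof -
    have "(of_real c + of_real s * cis 0)^N - of_real c ^ N = complex_of_real ((c + s)^N - c^N)" by simp
    then have "f 0 = \<bar>(c + s)^N - c^N\<bar>" unfolding f_def by (simp only: norm_of_real)
    moreover have "(c + s)^N - c^N \<ge> 0" using th c by (smt (verit) zero_less_power)
    ultimately show ?thesis by simp
  qed
  have fpi: "f pi = c^N - (c - s)^N"
  proof -
    have "(of_real c + of_real s * cis pi)^N - of_real c ^ N = complex_of_real ((c - s)^N - c^N)" by simp
    then have "f pi = \<bar>(c - s)^N - c^N\<bar>" unfolding f_def by (simp only: norm_of_real)
    moreover have "(c - s)^N \<le> c^N" using s by (intro power_mono) auto
    ultimately show ?thesis by simp
  qed
  have "f pi \<le> c^N" unfolding fpi using s by simp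
  moreover have "c^N \<le> f 0" unfolding f0 using th by simp
  moreover have "continuous_on {0..pi} f" unfolding f_def by (intro continuous_intros)
  ultimately obtain \<alpha> where "f \<alpha> = c^N" using IVT2'[where f=f and a=0 and b=pi and y="c^N"] pi_ge_zero by auto
  define v where "v = cis \<alpha>"
  define w where "w = 1 - (of_real c + of_real s * v)^N / of_real c ^ N"
  have cN: "complex_of_real c ^ N \<noteq> 0" using c by simp
  have "cmod w = cmod ((of_real c + of_real s * v)^N - of_real c ^ N) / cmod (of_real c ^ N)"
    unfolding w_def using cN
    by (metis (no_types, lifting) diff_divide_distrib divide_self norm_divide norm_minus_commute)
  also have "\<dots> = 1" using \<open>f \<alpha> = c^N\<close> c unfolding f_def v_def by (simp add: norm_power)
  finally have "cmod w = 1" .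
  moreover have "(of_real c + of_real s * v)^N + (w - 1) * of_real c ^ N = 0"
    unfolding w_def using cN by (simp add: field_simps)
  moreover have "cmod v = 1" unfolding v_def by simp
  ultimately show ?thesis by blast
qed



lemma qstate_idx:
  "qstate \<theta> x $ 0 = complex_of_real (cos (\<theta>/2))"
  "qstate \<theta> x $ 1 = complex_of_real ((if x then -1 else 1) * sin (\<theta>/2))"
  by (simp_all add: qstate_def)

lemma povm_construction:
  fixes \<theta> :: real
  defines "c \<equiv> cos (\<theta>/2)" and "s \<equiv> sin (\<theta>/2)"
  assumes c: "c > 0" and s: "0 \<le> s" "s \<le> c" and th: "(c + s)^N \<ge> 2 * c^N"
  shows "\<exists>M. povm (2 ^ N) {..<2 ^ N} M \<and> (\<forall>k<2 ^ N. braket (qstateN N \<theta> k) (M k) = 0)"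
proof -
  obtain v w :: complex where v: "cmod v = 1" and w: "cmod w = 1"
    and vw: "(of_real c + of_real s * v)^N + (w - 1) * of_real c ^ N = 0"
    using exists_vw[OF c s th] by blast
  define d :: nat where "d = 2^N"
  define sg :: "nat \<Rightarrow> nat \<Rightarrow> complex" where "sg k j = (\<Prod>l<N. if bit k l \<and> bit j l then -1 else 1)" for k j
  define u :: "nat \<Rightarrow> complex" where "u j = (\<Prod>l<N. if bit j l then v else 1) + (if j = 0 then w - 1 else 0)" for j
  define a :: complex where "a = of_real (1 / sqrt (2^N))"
  define phi where "phi k = vec d (\<lambda>j. a * u j * sg k j)" for k
  define M where "M k = dens (phi k)" for k
  have phi_car: "phi k \<in> carrier_vec d" for k unfolding phi_def by simp
  have u_norm: "u j * cnj (u j) = 1" for j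
  proof (cases "j = 0")
    case True
    then have "u j = w" unfolding u_def by simp
    then show ?thesis using w by (simp add: complex_mult_cnj complex_norm cmod_def) 
  next
    case False
    have "cmod (\<Prod>l<N. if bit j l then v else 1) = (\<Prod>l<N. cmod (if bit j l then v else 1))"
      by (simp add: prod_norm)
    also have "\<dots> = 1" using v by (intro prod.neutral) simp
    finally have "cmod (u j) = 1" unfolding u_def using False by simp
    then show ?thesis by (simp add: complex_mult_cnj cmod_def) 
  qed
  have psdM: "psd d (M k)" for k unfolding M_def by (rule psd_dens[OF phi_car])
  have sg_cnj: "cnj (sg k j) = sg k j" for k j
    unfolding sg_def by (simp only: cnj_prod) (intro prod.cong; simp)
  have aa: "a * cnj a = 1 / 2^N" unfolding a_def
    by (simp add: complex_of_real_mult_Complex[symmetric] power_divide real_sqrt_power[symmetric] of_real_mult[symmetric] del: of_real_mult)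
  have Mkij: "M k $$ (i, j) = (a * cnj a) * (u i * cnj (u j)) * (sg k i * sg k j)" if "i < d" "j < d" for k i j
    using that unfolding M_def dens_def phi_def by (simp add: sg_cnj mult_ac)
  have sgsum: "(\<Sum>k<d. sg k i * sg k j) = (\<Prod>l<N. 1 + (if bit i l then -1 else 1) * (if bit j l then -1 else 1))" for i j
  proof -
    have "(\<Sum>k<d. sg k i * sg k j) = (\<Sum>k<(2::nat)^N. \<Prod>l<N. (\<lambda>l b. (if b \<and> bit i l then -1 else 1) * (if b \<and> bit j l then -1 else (1::complex))) l (bit k l))"
      unfolding sg_def d_def by (simp add: prod.distrib)
    also have "\<dots> = (\<Prod>l<N. 1 + (if bit i l then -1 else 1) * (if bit j l then -1 else 1))"
      by (subst sum_bits_prod) simp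
    finally show ?thesis .
  qed
  have sumM: "(\<Sum>k\<in>{..<d}. M k $$ (i, j)) = 1\<^sub>m d $$ (i, j)" if ij: "i < d" "j < d" for i j
  proof -
    have "(\<Sum>k\<in>{..<d}. M k $$ (i, j)) = (a * cnj a) * (u i * cnj (u j)) * (\<Sum>k<d. sg k i * sg k j)"
      using ij by (simp add: Mkij sum_distrib_left)
    also have "\<dots> = 1\<^sub>m d $$ (i, j)"
    proof (cases "i = j")
      case True
      have "(\<Prod>l<N. 1 + (if bit i l then -1 else 1) * (if bit j l then -1 else (1::complex))) = 2^N"
        using True by (simp add: if_distrib cong: if_cong)
      then show ?thesis using True ij u_norm aa by (simp add: sgsum)
    next
      case False
      then obtain l where l: "l < N" "bit i l \<noteq> bit j l"
        using bits_eq_imp_eq[of i N j] ij unfolding d_def by blast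
      have "(\<Prod>l<N. 1 + (if bit i l then -1 else 1) * (if bit j l then -1 else (1::complex))) = 0"
        using l by (intro prod_zero) (auto intro!: bexI[of _ l])
      then show ?thesis using False ij by (simp add: sgsum)
    qed
    finally show ?thesis .
  qed
  define P :: "nat \<Rightarrow> complex" where "P i = (\<Prod>l<N. if bit i l then of_real s else of_real c)" for i
  have trm: "phi k $ i * cnj (qstateN N \<theta> k $ i) = a * (u i * P i)" if "i < d" for k i
  proof -
    have "phi k $ i * cnj (qstateN N \<theta> k $ i) = a * u i * (sg k i * (\<Prod>l<N. cnj (qstate \<theta> (bit k l) $ (if bit i l then 1 else 0))))"
      using that unfolding phi_def qstateN_def d_def by (simp add: cnj_prod)
    also have "sg k i * (\<Prod>l<N. cnj (qstate \<theta> (bit k l) $ (if bit i l then 1 else 0))) = P i"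
      unfolding sg_def P_def prod.distrib[symmetric]
      by (intro prod.cong) (auto simp: qstate_def c_def s_def)
    finally show ?thesis by (simp add: mult_ac)
  qed
  have sum1: "(\<Sum>i<d. (\<Prod>l<N. if bit i l then v else 1) * P i) = (of_real c + of_real s * v)^N"
  proof -
    have "(\<Sum>i<d. (\<Prod>l<N. if bit i l then v else 1) * P i)
        = (\<Sum>i<(2::nat)^N. \<Prod>l<N. (\<lambda>l b. if b then v * of_real s else of_real c) l (bit i l))"
      unfolding P_def d_def prod.distrib[symmetric] by (intro sum.cong refl prod.cong) auto
    also have "\<dots> = (of_real c + of_real s * v)^N" by (subst sum_bits_prod) (simp add: mult_ac add_ac)
    finally show ?thesis .
  qed
  have sum2: "(\<Sum>i<d. (if i = 0 then w - 1 else 0) * P i) = (w - 1) * of_real c ^ N"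
  proof -
    have "(\<Sum>i<d. (if i = 0 then w - 1 else 0) * P i) = (\<Sum>i<d. if i = 0 then (w - 1) * P i else 0)"
      by (intro sum.cong) auto
    also have "\<dots> = (w - 1) * P 0" unfolding d_def by (simp add: sum.delta)
    also have "P 0 = of_real c ^ N" unfolding P_def by simp
    finally show ?thesis by simp
  qed
  have bra: "braket (qstateN N \<theta> k) (M k) = 0" for k
  proof -
    have dims: "dim_vec (qstateN N \<theta> k) = dim_vec (phi k)" "dim_vec (phi k) = d"
      unfolding qstateN_def phi_def d_def by simp_all
    have "(\<Sum>i<dim_vec (phi k). phi k $ i * cnj (qstateN N \<theta> k $ i)) = a * (\<Sum>i<d. u i * P i)"
      unfolding dims(2) by (simp add: trm sum_distrib_left)
    also have "(\<Sum>i<d. u i * P i) = (\<Sum>i<d. (\<Prod>l<N. if bit i l then v else 1) * P i) + (\<Sum>i<d. (if i = 0 then w - 1 else 0) * P i)"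
      unfolding u_def by (simp add: distrib_right sum.distrib)
    also have "\<dots> = 0" unfolding sum1 sum2 by (rule vw)
    finally show ?thesis unfolding braket_def M_def dens_quad[OF dims(1)] by simp
  qed
  have "povm (2 ^ N) {..<2 ^ N} M"
    unfolding povm_def using psdM sumM unfolding d_def by auto
  then show ?thesis using bra by blast
qed



lemma sum2: "(\<Sum>i<(2::nat). f i) = f 0 + f 1" "(\<Sum>i\<in>{0..<(2::nat)}. f i) = f 0 + f 1"
  by (simp_all add: numeral_2_eq_2 atLeast0LessThan)

lemma tr_formula:
  fixes E :: "complex mat"
  assumes E: "E \<in> carrier_mat 2 2"
  shows "mtrace (dens (qstate \<theta> x) * E) =
    of_real ((cos (\<theta>/2))^2) * E$$(0,0) + of_real ((sin (\<theta>/2))^2) * E$$(1,1)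
    + of_real ((if x then -1 else 1) * cos (\<theta>/2) * sin (\<theta>/2)) * (E$$(0,1) + E$$(1,0))"
proof -
  have dq: "dim_vec (qstate \<theta> x) = 2" by (simp add: qstate_def)
  have dr: "dim_row E = 2" "dim_col E = 2" using E by auto
  show ?thesis
    unfolding mtrace_def using dr dq
    by (simp add: sum2 index_mult_mat scalar_prod_def dens_def qstate_def power2_eq_square
        algebra_simps)
qed

lemma quad_form:
  fixes E :: "complex mat" and r :: complex
  assumes E: "E \<in> carrier_mat 2 2"
  shows "(E *\<^sub>v vec_of_list [1, r]) \<bullet>c vec_of_list [1, r] =
    E$$(0,0) + E$$(0,1) * r + E$$(1,0) * cnj r + E$$(1,1) * r * cnj r"
proof -
  have dr: "dim_row E = 2" "dim_col E = 2" using E by auto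
  show ?thesis using dr
    by (simp add: sum2 scalar_prod_def row_def algebra_simps)
qed



lemma aux_e:
  fixes c s f00 f11 f01 f10 t00 t11 t01 t10 :: real
  assumes "f00+t00=1" "f11+t11=1" "f01+t01=0" "f10+t10=0" "c^2+s^2=1"
  shows "1/2*(c^2*f00 + s^2*f11 + c*s*(f01+f10)) + 1/2*(c^2*t00+s^2*t11+c*s*(t01+t10)) = 1/2"
    "1/2*(c^2*f00 + s^2*f11 - c*s*(f01+f10)) + 1/2*(c^2*t00+s^2*t11-c*s*(t01+t10)) = 1/2"
    "1/2*(c^2*f00 + s^2*f11 + c*s*(f01+f10)) + 1/2*(c^2*t00+s^2*t11-c*s*(t01+t10)) = 1/2*(1 + c*s*((f01+f10) - (t01+t10)))"
    "1/2*(c^2*f00 + s^2*f11 - c*s*(f01+f10)) + 1/2*(c^2*t00+s^2*t11+c*s*(t01+t10)) = 1/2*(1 + c*s*(-((f01+f10) - (t01+t10))))"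
proof -
  have t: "t00 = 1 - f00" "t11 = 1 - f11" "t01 = - f01" "t10 = - f10" using assms by linarith+
  have c2: "c^2 = 1 - s^2" using assms(5) by linarith
  show "1/2*(c^2*f00 + s^2*f11 + c*s*(f01+f10)) + 1/2*(c^2*t00+s^2*t11+c*s*(t01+t10)) = 1/2"
    unfolding t c2 by (simp add: algebra_simps)
  show "1/2*(c^2*f00 + s^2*f11 - c*s*(f01+f10)) + 1/2*(c^2*t00+s^2*t11-c*s*(t01+t10)) = 1/2"
    unfolding t c2 by (simp add: algebra_simps)
  show "1/2*(c^2*f00 + s^2*f11 + c*s*(f01+f10)) + 1/2*(c^2*t00+s^2*t11-c*s*(t01+t10)) = 1/2*(1 + c*s*((f01+f10) - (t01+t10)))"
    unfolding t c2 by (simp add: algebra_simps)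
  show "1/2*(c^2*f00 + s^2*f11 - c*s*(f01+f10)) + 1/2*(c^2*t00+s^2*t11+c*s*(t01+t10)) = 1/2*(1 + c*s*(-((f01+f10) - (t01+t10))))"
    unfolding t c2 by (simp add: algebra_simps)
qed

lemma AQ_value:
  fixes \<theta> :: real
  defines "c \<equiv> cos (\<theta>/2)" and "s \<equiv> sin (\<theta>/2)"
  assumes cs: "c \<ge> 0" "s \<ge> 0"
  shows "AQ \<theta> = (1 + sin \<theta>) / 2"
proof -
  have one: "c^2 + s^2 = 1" unfolding c_def s_def by simp
  have sinth: "sin \<theta> = 2 * s * c" unfolding c_def s_def using sin_double[of "\<theta>/2"] by simp
  define g where "g M = (\<Sum>z\<in>(UNIV::bool set). Min ((\<lambda>x. 1/2 * Re (mtrace (dens (qstate \<theta> x) * M z))) ` UNIV))" for M :: "bool \<Rightarrow> complex mat"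
  define L where "L = (1 - sin \<theta>) / 2"
  have tr: "Re (mtrace (dens (qstate \<theta> x) * E)) =
     c^2 * Re (E$$(0,0)) + s^2 * Re (E$$(1,1)) + (if x then -1 else 1) * c * s * Re (E$$(0,1) + E$$(1,0))"
    if "E \<in> carrier_mat 2 2" for E x
    unfolding tr_formula[OF that] c_def s_def by simp
  have trF: "Re (mtrace (dens (qstate \<theta> False) * E)) =
     c^2 * Re (E$$(0,0)) + s^2 * Re (E$$(1,1)) + c * s * (Re (E$$(0,1)) + Re (E$$(1,0)))"
    if "E \<in> carrier_mat 2 2" for E
    unfolding tr[OF that] by simp
  have trT: "Re (mtrace (dens (qstate \<theta> True) * E)) =
     c^2 * Re (E$$(0,0)) + s^2 * Re (E$$(1,1)) - c * s * (Re (E$$(0,1)) + Re (E$$(1,0)))"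
    if "E \<in> carrier_mat 2 2" for E
    unfolding tr[OF that] by simp
  have gval: "g M = min (1/2 * Re (mtrace (dens (qstate \<theta> False) * M False))) (1/2 * Re (mtrace (dens (qstate \<theta> True) * M False)))
     + min (1/2 * Re (mtrace (dens (qstate \<theta> False) * M True))) (1/2 * Re (mtrace (dens (qstate \<theta> True) * M True)))" for M
    unfolding g_def by (simp add: UNIV_bool)
  have lower: "L \<le> g M" if "povm 2 UNIV M" for M
  proof -
    define F where "F = M False"
    define T where "T = M True"
    have pF: "psd 2 F" and pT: "psd 2 T" using that unfolding povm_def F_def T_def by auto
    have Fc: "F \<in> carrier_mat 2 2" and Tc: "T \<in> carrier_mat 2 2" using pF pT unfolding psd_def by auto
    have sumI: "F $$ (i,j) + T $$ (i,j) = 1\<^sub>m 2 $$ (i,j)" if "i < 2" "j < 2" for i j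
      using \<open>povm 2 UNIV M\<close> that unfolding povm_def F_def T_def by (simp add: UNIV_bool add.commute)
    have "F$$(0,0) + T$$(0,0) = 1" using sumI[of 0 0] by simp
    then have s00: "Re (F$$(0,0)) + Re (T$$(0,0)) = 1" by (metis plus_complex.sel(1) one_complex.sel(1))
    have "F$$(1,1) + T$$(1,1) = 1" using sumI[of 1 1] by simp
    then have s11: "Re (F$$(1,1)) + Re (T$$(1,1)) = 1" by (metis plus_complex.sel(1) one_complex.sel(1))
    have "F$$(0,1) + T$$(0,1) = 0" using sumI[of 0 1] by simp
    then have s01: "Re (F$$(0,1)) + Re (T$$(0,1)) = 0" by (metis plus_complex.sel(1) zero_complex.sel(1))
    have "F$$(1,0) + T$$(1,0) = 0" using sumI[of 1 0] by simp
    then have s10: "Re (F$$(1,0)) + Re (T$$(1,0)) = 0" by (metis plus_complex.sel(1) zero_complex.sel(1))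
    have v2: "vec_of_list [1, r] \<in> carrier_vec 2" for r :: complex unfolding carrier_vec_def by (simp only: mem_Collect_eq dim_vec_of_list) simp
    have qf: "0 \<le> Re (E$$(0,0) + E$$(0,1) * r + E$$(1,0) * cnj r + E$$(1,1) * r * cnj r)" if "psd 2 E" for E r
    proof -
      have Ec: "E \<in> carrier_mat 2 2" using that unfolding psd_def by blast
      have "0 \<le> Re ((E *\<^sub>v vec_of_list [1, r]) \<bullet>c vec_of_list [1, r])"
        using that v2[of r] unfolding psd_def by blast
      then show ?thesis unfolding quad_form[OF Ec] .
    qed
    have qp: "0 \<le> Re (F$$(0,0) + F$$(0,1) + F$$(1,0) + F$$(1,1))"
      using qf[OF pF, of 1] by simp
    have qm: "0 \<le> Re (F$$(0,0) - F$$(0,1) - F$$(1,0) + F$$(1,1))"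
      using qf[OF pF, of "-1"] by simp
    have tp: "0 \<le> Re (T$$(0,0) + T$$(0,1) + T$$(1,0) + T$$(1,1))"
      using qf[OF pT, of 1] by simp
    have tm: "0 \<le> Re (T$$(0,0) - T$$(0,1) - T$$(1,0) + T$$(1,1))"
      using qf[OF pT, of "-1"] by simp
    define X where "X = (Re (F$$(0,1)) + Re (F$$(1,0))) - (Re (T$$(0,1)) + Re (T$$(1,0)))"
    have X1: "X \<ge> -2" using qp tm s00 s11 unfolding X_def by simp
    have X2: "-X \<ge> -2" using qm tp s00 s11 unfolding X_def by simp
    have cs0: "c * s \<ge> 0" using cs by simp
    have csX1: "c * s * X \<ge> - 2 * (c * s)" using mult_left_mono[OF X1 cs0] by simp
    have csX2: "c * s * (-X) \<ge> - 2 * (c * s)" using mult_left_mono[OF X2 cs0] by simp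
    let ?a0 = "1/2 * Re (mtrace (dens (qstate \<theta> False) * F))"
    let ?a1 = "1/2 * Re (mtrace (dens (qstate \<theta> True) * F))"
    let ?b0 = "1/2 * Re (mtrace (dens (qstate \<theta> False) * T))"
    let ?b1 = "1/2 * Re (mtrace (dens (qstate \<theta> True) * T))"
    have e1: "?a0 + ?b0 = 1/2" unfolding trF[OF Fc] trF[OF Tc] trT[OF Fc] trT[OF Tc] 
      by (rule aux_e(1)[OF s00 s11 s01 s10 one])
    have e2: "?a1 + ?b1 = 1/2" unfolding trF[OF Fc] trF[OF Tc] trT[OF Fc] trT[OF Tc] 
      by (rule aux_e(2)[OF s00 s11 s01 s10 one])
    have e3: "?a0 + ?b1 = 1/2 * (1 + c * s * X)" unfolding trF[OF Fc] trF[OF Tc] trT[OF Fc] trT[OF Tc] X_def 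
      by (rule aux_e(3)[OF s00 s11 s01 s10 one])
    have e4: "?a1 + ?b0 = 1/2 * (1 + c * s * (-X))" unfolding trF[OF Fc] trF[OF Tc] trT[OF Fc] trT[OF Tc] X_def 
      by (rule aux_e(4)[OF s00 s11 s01 s10 one])
    have "L \<le> 1/2" unfolding L_def sinth using cs by simp
    have key: "\<And>a0 a1 b0 b1 P Q K::real. a0+b0 = 1/2 \<Longrightarrow> a1+b1=1/2 \<Longrightarrow> a0+b1 = 1/2*(1+P) \<Longrightarrow> a1+b0 = 1/2*(1+Q)
       \<Longrightarrow> -2*K \<le> P \<Longrightarrow> -2*K \<le> Q \<Longrightarrow> (1-2*K)/2 \<le> 1/2 \<Longrightarrow> (1-2*K)/2 \<le> min a0 a1 + min b0 b1"
      by (simp add: min_def)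
    have L2: "L = (1 - 2 * (c * s)) / 2" unfolding L_def sinth by (simp add: mult_ac)
    show ?thesis unfolding gval F_def[symmetric] T_def[symmetric] L2
      by (rule key[OF e1 e2 e3 e4 csX1 csX2]) (use \<open>L \<le> 1/2\<close> L2 in simp)
  qed
  define r :: complex where "r = of_real (1 / sqrt 2)"
  define M0 where "M0 z = (if z then dens (vec 2 (\<lambda>i. r)) else dens (vec 2 (\<lambda>i. if i = 0 then r else -r)))" for z
  have "(1 / sqrt 2) * (1 / sqrt 2) = (1/2::real)" by simp
  then have rr: "r * cnj r = 1/2" unfolding r_def
    by (metis complex_cnj_complex_of_real of_real_mult of_real_divide of_real_1 of_real_numeral)
  have povm0: "povm 2 UNIV M0"
    unfolding povm_def
  proof (intro conjI ballI allI impI)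
    show "finite (UNIV :: bool set)" by simp
  next
    fix z show "psd 2 (M0 z)" unfolding M0_def by (auto intro!: psd_dens)
  next
    fix i j :: nat assume "i < 2" "j < 2"
    then show "(\<Sum>z\<in>UNIV. M0 z $$ (i, j)) = 1\<^sub>m 2 $$ (i, j)"
      unfolding M0_def using rr by (auto simp: UNIV_bool dens_def less_2_cases_iff mult.commute)
  qed
  have gM0: "g M0 = L"
  proof -
    have c0: "M0 z \<in> carrier_mat 2 2" for z unfolding M0_def dens_def by simp
    have t0: "M0 z $$ (0,0) = 1/2" "M0 z $$ (1,1) = 1/2" "M0 z $$ (0,1) + M0 z $$ (1,0) = (if z then 1 else -1)" for z
      unfolding M0_def dens_def using rr by (auto simp: mult.commute)
    have "g M0 = min (1/2 * (1/2 * c^2 + 1/2 * s^2 - c * s)) (1/2 * (1/2 * c^2 + 1/2 * s^2 + c * s))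
                + min (1/2 * (1/2 * c^2 + 1/2 * s^2 + c * s)) (1/2 * (1/2 * c^2 + 1/2 * s^2 - c * s))"
      unfolding gval tr[OF c0] t0 by simp
    also have "\<dots> = (1/2 * (1/2 * c^2 + 1/2 * s^2 - c * s)) + (1/2 * (1/2 * c^2 + 1/2 * s^2 - c * s))"
      using mult_nonneg_nonneg[OF cs] by (simp add: min_def)
    also have "\<dots> = L"
    proof -
      have c2: "c^2 = 1 - s^2" using one by linarith
      show ?thesis unfolding L_def sinth c2 by (simp add: algebra_simps)
    qed
    finally show ?thesis .
  qed
  have "(INF M \<in> {M. povm 2 (UNIV::bool set) M}. g M) = L"
    by (rule cInf_eq_minimum) (use povm0 gM0 lower in auto)
  then show ?thesis unfolding AQ_def antidist_def g_def[symmetric] L_def by simp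
qed



lemma antidistC_bool: "antidist_C Ms e = 1 - (\<Sum>m\<in>Ms. min (1/2 * e False m) (1/2 * e True m))"
  unfolding antidist_C_def by (simp add: UNIV_bool)

lemma AC_value:
  assumes N: "N \<ge> 1"
  shows "AC N = 1"
proof -
  define S where "S = {A. \<exists>Ms pe pd. classical_strategy N Ms pe pd \<and> succ_C N Ms pe pd = 1
                     \<and> (\<forall>i<N. antidist_C (Ms i) (pe i) = A)}"
  have lower: "1 \<le> A" if AS: "A \<in> S" for A
  proof (rule ccontr)
    assume "\<not> 1 \<le> A"
    then have A1: "A < 1" by simp
    obtain Ms pe pd where cs: "classical_strategy N Ms pe pd" and sc: "succ_C N Ms pe pd = 1"
      and ad: "\<forall>i<N. antidist_C (Ms i) (pe i) = A" using AS unfolding S_def by blast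
    have fin: "\<And>i. i < N \<Longrightarrow> finite (Ms i)" and pe0: "\<And>i x m. i < N \<Longrightarrow> m \<in> Ms i \<Longrightarrow> 0 \<le> pe i x m"
      using cs unfolding classical_strategy_def by auto
    have pd: "\<And>m. m \<in> PiE {..<N} Ms \<Longrightarrow> (\<forall>z<2 ^ N. 0 \<le> pd m z) \<and> (\<Sum>z<2 ^ N. pd m z) = 1"
      using cs unfolding classical_strategy_def by auto
    have ex: "\<exists>m. m \<in> Ms i \<and> 0 < pe i False m \<and> 0 < pe i True m" if i: "i < N" for i
    proof (rule ccontr)
      assume nex: "\<not> (\<exists>m. m \<in> Ms i \<and> 0 < pe i False m \<and> 0 < pe i True m)"
      have "\<forall>m\<in>Ms i. min (1/2 * pe i False m) (1/2 * pe i True m) \<le> 0"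
      proof
        fix m assume m: "m \<in> Ms i"
        then have "\<not> (0 < pe i False m) \<or> \<not> (0 < pe i True m)" using nex by blast
        then show "min (1/2 * pe i False m) (1/2 * pe i True m) \<le> 0" by auto
      qed
      then have "(\<Sum>m\<in>Ms i. min (1/2 * pe i False m) (1/2 * pe i True m)) \<le> 0"
        by (simp add: sum_nonpos)
      then have "antidist_C (Ms i) (pe i) \<ge> 1" unfolding antidistC_bool by simp
      then show False using ad i A1 by auto
    qed
    define mm where "mm i = (if i < N then (SOME m. m \<in> Ms i \<and> 0 < pe i False m \<and> 0 < pe i True m) else undefined)" for i
    have mm: "mm i \<in> Ms i \<and> 0 < pe i False (mm i) \<and> 0 < pe i True (mm i)" if "i < N" for i
      using someI_ex[OF ex[OF that]] that unfolding mm_def by simp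
    have mmP: "mm \<in> PiE {..<N} Ms" using mm unfolding mm_def by (auto simp: PiE_def extensional_def)
    obtain z where z: "z < 2^N" "pd mm z > 0"
    proof (rule ccontr)
      assume "\<not> thesis"
      then have "\<forall>z\<in>{..<2^N}. pd mm z \<le> 0" using that by force
      then have "(\<Sum>z<2 ^ N. pd mm z) \<le> 0" by (meson sum_nonpos)
      then show False using pd[OF mmP] by simp
    qed
    have finP: "finite (PiE {..<N} Ms)" using fin by (intro finite_PiE) auto
    have termnn: "0 \<le> (\<Prod>i<N. pe i (bit k i) (m i)) * pd m k" if "m \<in> PiE {..<N} Ms" "k < 2^N" for m k
      using that pd[OF that(1)] pe0 by (intro mult_nonneg_nonneg prod_nonneg) (auto simp: PiE_def Pi_def)
    have cpnn: "0 \<le> cprob N Ms pe pd k k" if "k < 2^N" for k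
      unfolding cprob_def using termnn that by (intro sum_nonneg) auto
    have "(\<Sum>k<2 ^ N. (1 / 2) ^ N * cprob N Ms pe pd k k) = 0" using sc unfolding succ_C_def by simp
    then have "\<forall>k\<in>{..<2^N}. (1 / 2) ^ N * cprob N Ms pe pd k k = 0"
      using cpnn by (subst sum_nonneg_eq_0_iff[symmetric]) auto
    then have "cprob N Ms pe pd z z = 0" using z by simp
    then have "\<forall>m\<in>PiE {..<N} Ms. (\<Prod>i<N. pe i (bit z i) (m i)) * pd m z = 0"
      unfolding cprob_def using termnn z finP by (subst sum_nonneg_eq_0_iff[symmetric]) auto
    then have "(\<Prod>i<N. pe i (bit z i) (mm i)) * pd mm z = 0" using mmP by blast
    moreover have "(\<Prod>i<N. pe i (bit z i) (mm i)) > 0"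
    proof (intro prod_pos ballI)
      fix i assume "i \<in> {..<N}"
      then show "0 < pe i (bit z i) (mm i)" using mm[of i] by (cases "bit z i") auto
    qed
    ultimately show False using z mult_pos_pos by (metis less_irrefl)
  qed
  define Ms :: "nat \<Rightarrow> nat set" where "Ms i = {0, 1}" for i
  define pe :: "nat \<Rightarrow> bool \<Rightarrow> nat \<Rightarrow> real" where "pe i x m = (if m = (if x then 1 else 0) then 1 else 0)" for i x m
  define tg :: "(nat \<Rightarrow> nat) \<Rightarrow> nat" where "tg m = (if m 0 = 1 then 0 else 1)" for m
  define pd :: "(nat \<Rightarrow> nat) \<Rightarrow> nat \<Rightarrow> real" where "pd m z = (if z = tg m then 1 else 0)" for m z
  have tg2: "tg m < 2^N" for m
  proof -
    have "tg m < 2" unfolding tg_def by simp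
    also have "(2::nat) \<le> 2^N" using N by (metis power_one_right power_increasing one_le_numeral)
    finally show ?thesis .
  qed
  have csx: "classical_strategy N Ms pe pd"
    unfolding classical_strategy_def
  proof (intro conjI allI impI ballI)
    fix i x assume "i < N"
    show "finite (Ms i)" unfolding Ms_def by simp
    show "\<And>m. m \<in> Ms i \<Longrightarrow> 0 \<le> pe i x m" unfolding pe_def by simp
    show "(\<Sum>m\<in>Ms i. pe i x m) = 1" unfolding Ms_def pe_def by simp
  next
    fix m and z :: nat assume "m \<in> PiE {..<N} Ms" "z < 2^N"
    show "0 \<le> pd m z" unfolding pd_def by simp
  next
    fix m assume "m \<in> PiE {..<N} Ms"
    show "(\<Sum>z<2 ^ N. pd m z) = 1" unfolding pd_def using tg2[of m] by (simp add: sum.delta')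
  qed
  have cp0: "cprob N Ms pe pd k k = 0" for k
    unfolding cprob_def
  proof (intro sum.neutral ballI)
    fix m assume "m \<in> PiE {..<N} Ms"
    show "(\<Prod>i<N. pe i (bit k i) (m i)) * pd m k = 0"
    proof (cases "k = tg m")
      case True
      have "pe 0 (bit k 0) (m 0) = 0"
        using True unfolding tg_def pe_def by (auto simp: bit_0)
      then have "(\<Prod>i<N. pe i (bit k i) (m i)) = 0" using N by (intro prod_zero) (auto intro!: bexI[of _ 0])
      then show ?thesis by simp
    next
      case False
      then show ?thesis unfolding pd_def by simp
    qed
  qed
  have scx: "succ_C N Ms pe pd = 1" unfolding succ_C_def using cp0 by simp
  have adx: "antidist_C (Ms i) (pe i) = 1" for i
    unfolding antidistC_bool Ms_def pe_def by simp
  have "1 \<in> S" unfolding S_def using csx scx adx by blast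
  then have "Inf S = 1" using lower by (intro cInf_eq_minimum) auto
  then show ?thesis unfolding AC_def S_def by simp
qed


theorem theorem2:
  fixes N :: nat and \<theta> :: real
  assumes "N \<ge> 1"
    and "2 * arctan (2 powr (1 / real N) - 1) \<le> \<theta>"
    and "\<theta> < pi / 2"
  shows "(\<exists>M. povm (2 ^ N) {..<2 ^ N} M
              \<and> (\<forall>k<2 ^ N. braket (qstateN N \<theta> k) (M k) = 0)
              \<and> succ_Q N \<theta> M = 1)
       \<and> AQ \<theta> = (1 + sin \<theta>) / 2
       \<and> AC N = 1
       \<and> (AC N / AQ \<theta>) ^ N = (2 / (1 + sin \<theta>)) ^ N
       \<and> (2 / (1 + sin \<theta>)) ^ N > 1"
proof -
  define a where "a = arctan (2 powr (1 / real N) - 1)"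
  define c where "c = cos (\<theta>/2)"
  define s where "s = sin (\<theta>/2)"
  have p1: "2 powr (1 / real N) \<ge> 1" by (rule ge_one_powr_ge_zero) auto
  have a0: "a \<ge> 0" unfolding a_def using p1 by (simp add: arctan_le_iff[of 0, simplified])
  have th0: "\<theta> \<ge> 0" using assms(2) a0 unfolding a_def[symmetric] by linarith
  have thpi: "\<theta>/2 < pi/4" using assms(3) by simp
  have c0: "c > 0" unfolding c_def using th0 thpi pi_gt_zero by (intro cos_gt_zero_pi) linarith+
  have s0: "s \<ge> 0" unfolding s_def using th0 thpi pi_gt_zero by (intro sin_ge_zero) linarith+
  have tanle: "tan a \<le> tan (\<theta>/2)"
    using assms(2) thpi arctan_lbound[of "2 powr (1 / real N) - 1"] pi_gt_zero
    unfolding a_def[symmetric] by (intro tan_mono_le) linarith+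
  have tana: "tan a = 2 powr (1 / real N) - 1" unfolding a_def by (simp add: arctan)
  have tanlt: "tan (\<theta>/2) < 1"
  proof -
    have "tan (\<theta>/2) < tan (pi/4)" using thpi th0 pi_gt_zero
      by (intro tan_monotone) linarith+
    then show ?thesis by (simp add: tan_45)
  qed
  have tcs: "tan (\<theta>/2) = s / c" unfolding s_def c_def by (simp add: tan_def)
  have sc: "s \<le> c" using tanlt c0 unfolding tcs by (simp add: divide_less_eq)
  have ratio: "(c + s) / c \<ge> 2 powr (1 / real N)"
    using tanle c0 unfolding tana tcs by (simp add: add_divide_distrib)
  have "((c + s) / c)^N \<ge> (2 powr (1 / real N))^N"
    using ratio by (intro power_mono) auto
  also have "(2 powr (1 / real N))^N = 2" using assms(1) by (simp add: powr_power)
  finally have "((c + s) / c)^N \<ge> 2" .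
  then have th: "(c + s)^N \<ge> 2 * c^N" using c0 by (simp add: power_divide le_divide_eq)
  obtain M where M: "povm (2 ^ N) {..<2 ^ N} M" "\<forall>k<2 ^ N. braket (qstateN N \<theta> k) (M k) = 0"
    using povm_construction[of \<theta> N] c0 s0 sc th unfolding c_def s_def by blast
  have sQ: "succ_Q N \<theta> M = 1" unfolding succ_Q_def using M(2) by simp
  have AQv: "AQ \<theta> = (1 + sin \<theta>) / 2" using AQ_value[of \<theta>] c0 s0 unfolding c_def s_def by simp
  have ACv: "AC N = 1" by (rule AC_value[OF assms(1)])
  have sin1: "sin \<theta> < 1"
  proof -
    have "sin \<theta> < sin (pi/2)" using th0 assms(3) pi_gt_zero by (intro sin_monotone_2pi) auto
    then show ?thesis by simp
  qed
  have sin0: "sin \<theta> \<ge> 0" using th0 assms(3) by (intro sin_ge_zero) auto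
  have gt: "2 / (1 + sin \<theta>) > 1" using sin1 sin0 by simp
  have "(2 / (1 + sin \<theta>)) ^ N > 1" using gt assms(1) by (intro one_less_power) auto
  moreover have "(AC N / AQ \<theta>) ^ N = (2 / (1 + sin \<theta>)) ^ N" unfolding ACv AQv by simp
  ultimately show ?thesis using M sQ AQv ACv by blast
qed

end
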